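(* Let $q$ be a prime power and let $M=(m_{ij})$ be a $2\times 2$ matrix over $\mathbb{F}_{q^2}$ with $m_{21}\neq 0$ and $m_{12}\neq 0$. Then: (i) $\sharp(\mathrm{Num}'_0(M))\ge\lceil (q+1)/2\rceil$; (ii) if $(-m_{12}/m_{21})^{q+1}\neq 1$, then $\sharp(\mathrm{Num}'_0(M))\ge q+1$.
   Context: The Hermitian form on $\mathbb{F}_{q^2}^n$ is $\langle u,v\rangle=\sum_i u_i^q v_i$. For an $n\times n$ matrix $M$ over $\mathbb{F}_{q^2}$ with $n\ge 2$, $\mathrm{Num}'_0(M)=\{\langle u,Mu\rangle: u\in\mathbb{F}_{q^2}^n\setminus\{0\},\ \langle u,u\rangle=0\}$. *)

theory Defs
  imports "HOL-Analysis.Analysis"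
begin

definition herm :: "nat \<Rightarrow> ('a::field)^'n \<Rightarrow> 'a^'n \<Rightarrow> 'a" where
  "herm q u v = (\<Sum>i\<in>UNIV. (u $ i) ^ q * v $ i)"

definition Num0' :: "nat \<Rightarrow> ('a::field)^'n^'n \<Rightarrow> 'a set" where
  "Num0' q M = {herm q u (M *v u) | u. u \<noteq> 0 \<and> herm q u u = 0}"

end

theory Submission imports Defs "HOL-Computational_Algebra.Polynomial"
begin

lemma fib_card: "finite S \<Longrightarrow> card S = (\<Sum>y\<in>g ` S. card {x. x \<in> S \<and> g x = y})"
  using sum.image_gen[of S "\<lambda>_. (1::nat)" g] by simp

lemma fermat_fin:
  fixes x :: "'a::{field,finite}"
  assumes "x \<noteq> 0" shows "x ^ (CARD('a) - 1) = 1"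
proof -
  let ?G = "UNIV - {0::'a}"
  have cG: "card ?G = CARD('a) - 1" by (simp add: card_Diff_singleton)
  have img: "(\<lambda>y. x * y) ` ?G = ?G"
  proof
    show "(\<lambda>y. x * y) ` ?G \<subseteq> ?G" using assms by auto
    show "?G \<subseteq> (\<lambda>y. x * y) ` ?G"
    proof
      fix z assume "z \<in> ?G"
      then have "z = x * (z / x)" "z / x \<in> ?G" using assms by auto
      then show "z \<in> (\<lambda>y. x * y) ` ?G" by blast
    qed
  qed
  have inj: "inj_on (\<lambda>y. x * y) ?G" using assms by (auto simp: inj_on_def)
  have "prod (\<lambda>y. y) ?G = prod (\<lambda>y. y) ((\<lambda>y. x * y) ` ?G)" using img by simp
  also have "\<dots> = prod (\<lambda>y. x * y) ?G" using prod.reindex[OF inj] by simp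
  also have "\<dots> = x ^ card ?G * prod (\<lambda>y. y) ?G" by (simp add: prod.distrib)
  finally have "x ^ card ?G * prod (\<lambda>y. y) ?G = 1 * prod (\<lambda>y. y) ?G" by simp
  moreover have "prod (\<lambda>y. y) ?G \<noteq> 0" by simp
  ultimately show ?thesis using cG by simp
qed

lemma roots_bound:
  fixes c :: "'a::field"
  assumes "m \<ge> 1" shows "card {x. x ^ m = c} \<le> m"
proof -
  let ?p = "monom 1 m + [:-c:]"
  have deg: "degree ?p = m" using assms
    by (subst degree_add_eq_left) (auto simp: degree_monom_eq)  
  have "?p \<noteq> 0" using deg assms by auto
  hence "card {x. poly ?p x = 0} \<le> degree ?p" by (rule card_poly_roots_bound)
  moreover have "{x. poly ?p x = 0} = {x. x ^ m = c}" by (simp add: poly_monom)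
  ultimately show ?thesis using deg by simp
qed

lemma count_T:
  fixes q :: nat
  assumes card: "CARD('a::{field,finite}) = q ^ 2"
  shows "card {t::'a. t ^ (q + 1) = -1} \<ge> q + 1"
proof -
  have q2: "q \<ge> 2"
  proof (rule ccontr)
    assume "\<not> q \<ge> 2"
    hence "q \<le> 1" by simp
    hence "CARD('a) \<le> 1" using card by (cases q) auto
    moreover have "card {0::'a, 1} \<le> CARD('a)" by (rule card_mono) auto
    ultimately show False by simp
  qed
  let ?G = "UNIV - {0::'a}"
  let ?N = "\<lambda>x::'a. x ^ (q + 1)"
  let ?R = "{y::'a. y ^ (q - 1) = 1}"
  have fermat: "x ^ (q * q - 1) = 1" if "x \<noteq> 0" for x :: 'a
    using fermat_fin[OF that] card by (simp add: power2_eq_square)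
  have qq: "q * q - 1 = (q + 1) * (q - 1)" using q2
    by (simp add: algebra_simps diff_mult_distrib2)
  have cG: "card ?G = (q - 1) * (q + 1)" using card qq
    by (simp add: card_Diff_singleton power2_eq_square mult.commute)
  have sub: "?N ` ?G \<subseteq> ?R"
  proof
    fix y assume "y \<in> ?N ` ?G"
    then obtain x where "x \<noteq> 0" "y = x ^ (q + 1)" by auto
    then have "y ^ (q - 1) = x ^ (q * q - 1)" by (simp only: qq power_mult)
    then show "y \<in> ?R" using fermat \<open>x \<noteq> 0\<close> by simp
  qed
  have cR: "card ?R \<le> q - 1" using roots_bound[of "q - 1" "1::'a"] q2 by simp
  have fibb: "card {x. x \<in> ?G \<and> ?N x = y} \<le> q + 1" for y
  proof -
    have "card {x. x \<in> ?G \<and> ?N x = y} \<le> card {x::'a. x ^ (q + 1) = y}"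
      by (rule card_mono) auto
    also have "\<dots> \<le> q + 1" by (rule roots_bound) simp
    finally show ?thesis .
  qed
  have sumeq: "card ?G = (\<Sum>y\<in>?N ` ?G. card {x. x \<in> ?G \<and> ?N x = y})"
    by (rule fib_card) simp
  also have "\<dots> \<le> (\<Sum>y\<in>?N ` ?G. q + 1)" by (rule sum_mono) (rule fibb)
  also have "\<dots> = card (?N ` ?G) * (q + 1)" by simp
  finally have "(q - 1) * (q + 1) \<le> card (?N ` ?G) * (q + 1)" using cG by simp
  hence cI: "q - 1 \<le> card (?N ` ?G)" using mult_le_cancel2[of "q - 1" "q + 1" "card (?N ` ?G)"] by simp
  have eqR: "?N ` ?G = ?R"
    using card_subset_eq[OF _ sub] cI cR card_mono[OF _ sub] by fastforce
  have m1: "(-1::'a) ^ (q - 1) = 1"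
  proof (cases "even q")
    case True
    have "odd (q * q - 1)" using True q2 by auto
    hence "(-1::'a) ^ (q * q - 1) = -1" by simp
    hence "(-1::'a) = 1" using fermat[of "-1"] by simp
    thus ?thesis by (metis power_one)
  next
    case False
    hence "even (q - 1)" using q2 by auto
    thus ?thesis by simp
  qed
  hence inI: "-1 \<in> ?N ` ?G" using eqR by simp
  let ?f = "\<lambda>y. card {x. x \<in> ?G \<and> ?N x = y}"
  have "card ?G = ?f (-1) + (\<Sum>y\<in>?N ` ?G - {-1}. ?f y)"
    using sumeq inI by (simp add: sum.remove)
  also have "(\<Sum>y\<in>?N ` ?G - {-1}. ?f y) \<le> (\<Sum>y\<in>?N ` ?G - {-1}. q + 1)"
    by (rule sum_mono) (rule fibb)
  also have "\<dots> = (q - 2) * (q + 1)"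
    using eqR cR cI inI by (simp add: card_Diff_singleton numeral_2_eq_2)
  finally have "(q - 1) * (q + 1) \<le> ?f (-1) + (q - 2) * (q + 1)" using cG by simp
  moreover have "(q - 1) * (q + 1) = (q - 2) * (q + 1) + (q + 1)"
  proof -
    obtain r where "q = r + 2" using q2 by (metis le_add_diff_inverse2)
    thus ?thesis by (simp add: algebra_simps)
  qed
  ultimately have "q + 1 \<le> ?f (-1)" by linarith
  also have "?f (-1) \<le> card {t::'a. t ^ (q + 1) = -1}" by (rule card_mono) auto
  finally show ?thesis .
qed

theorem proposition4:
  fixes M :: "('a::{field,finite})^2^2" and q :: nat
  assumes "\<exists>p k. prime p \<and> k > 0 \<and> q = p ^ k"
    and "CARD('a) = q ^ 2"
    and "M $ 2 $ 1 \<noteq> 0" and "M $ 1 $ 2 \<noteq> 0"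
  shows "int (card (Num0' q M)) \<ge> \<lceil>real (q + 1) / 2\<rceil>
    \<and> ((- M $ 1 $ 2 / M $ 2 $ 1) ^ (q + 1) \<noteq> 1 \<longrightarrow> card (Num0' q M) \<ge> q + 1)"
proof -
  define a where "a = M $ 1 $ 2"
  define b where "b = M $ 2 $ 1"
  define T where "T = {t::'a. t ^ (q + 1) = -1}"
  define f where "f = (\<lambda>t::'a. M $ 1 $ 1 + a * t + t ^ q * (b + M $ 2 $ 2 * t))"
  have a0: "a \<noteq> 0" and b0: "b \<noteq> 0" using assms by (auto simp: a_def b_def)
  have cT: "card T \<ge> q + 1" unfolding T_def by (rule count_T[OF assms(2)])
  have sub: "f ` T \<subseteq> Num0' q M"
  proof
    fix v assume "v \<in> f ` T"
    then obtain t where t: "t ^ (q + 1) = -1" "v = f t" by (auto simp: T_def)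
    define u :: "'a^2" where "u = vector [1, t]"
    have "u \<noteq> 0" unfolding u_def by (metis vector_2(1) zero_index one_neq_zero)
    moreover have "herm q u u = 0" using t
      by (simp add: herm_def u_def sum_2 mult.commute)
    moreover have "herm q u (M *v u) = v" using t
      by (simp add: herm_def u_def sum_2 matrix_vector_mult_def f_def a_def b_def)
    ultimately show "v \<in> Num0' q M" unfolding Num0'_def by blast
  qed
  have fin: "finite (Num0' q M)" by simp
  have key: "t = s \<or> t * s = - b / a" if "t \<in> T" "s \<in> T" "f t = f s" for t s
  proof -
    have tt: "t ^ q * t = -1" "s ^ q * s = -1" using that(1,2)
      by (auto simp: T_def power_Suc2[symmetric])
    hence t0: "t \<noteq> 0" "s \<noteq> 0" by auto
    have tq: "t ^ q = -1 / t" "s ^ q = -1 / s" using tt t0 by (auto simp: field_simps)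
    have "a * t - b / t = a * s - b / s"
      using that(3) tq tt t0 unfolding f_def by (simp add: algebra_simps)
    hence "(a * t - b / t) * (t * s) = (a * s - b / s) * (t * s)" by simp
    moreover have "b / t * (t * s) = b * s" "b / s * (t * s) = b * t" using t0 by auto
    moreover have "(t - s) * (a * (t * s) + b) = (a * t - b / t) * (t * s) - (a * s - b / s) * (t * s)"
      using calculation(2,3) by (simp add: algebra_simps)
    ultimately have "(t - s) * (a * (t * s) + b) = 0" by simp
    hence "t - s = 0 \<or> a * (t * s) + b = 0" by simp
    moreover have "a * (t * s) + b = 0 \<Longrightarrow> t * s = - b / a" using a0
      by (simp add: eq_divide_eq add_eq_0_iff mult.commute)
    ultimately show ?thesis by auto
  qed
  have fib2: "card {x. x \<in> T \<and> f x = v} \<le> 2" if vT: "v \<in> f ` T" for v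
  proof -
    obtain t0 where t0: "t0 \<in> T" "v = f t0" using vT by auto
    have "{x. x \<in> T \<and> f x = v} \<subseteq> {t0, (- b / a) / t0}"
    proof
      fix x assume "x \<in> {x. x \<in> T \<and> f x = v}"
      hence "x = t0 \<or> x * t0 = - b / a" using key[of x t0] t0 by auto
      moreover have "t0 \<noteq> 0" using t0 by (auto simp: T_def)
      moreover have "x * t0 = - b / a \<Longrightarrow> x = (- b / a) / t0" using \<open>t0 \<noteq> 0\<close>
        by (metis nonzero_mult_div_cancel_right)
      ultimately show "x \<in> {t0, (- b / a) / t0}" by blast
    qed
    hence "card {x. x \<in> T \<and> f x = v} \<le> card {t0, (- b / a) / t0}" by (rule card_mono[rotated]) simp
    also have "\<dots> \<le> 2" by (simp add: card_insert_if)
    finally show ?thesis .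
  qed
  have "card T = (\<Sum>v\<in>f ` T. card {x. x \<in> T \<and> f x = v})" by (rule fib_card) simp
  also have "\<dots> \<le> (\<Sum>v\<in>f ` T. 2)" by (rule sum_mono) (rule fib2)
  also have "\<dots> = 2 * card (f ` T)" by simp
  finally have "q + 1 \<le> 2 * card (f ` T)" using cT by linarith
  moreover have "card (f ` T) \<le> card (Num0' q M)" using card_mono[OF fin sub] .
  ultimately have i: "q + 1 \<le> 2 * card (Num0' q M)" by linarith
  have part1: "int (card (Num0' q M)) \<ge> \<lceil>real (q + 1) / 2\<rceil>"
  proof -
    have "real (q + 1) / 2 \<le> real (card (Num0' q M))"
      using of_nat_mono[OF i, where 'a=real] by simp
    thus ?thesis by (simp add: ceiling_le_iff)
  qed
  have part2: "card (Num0' q M) \<ge> q + 1" if ne: "(- M $ 1 $ 2 / M $ 2 $ 1) ^ (q + 1) \<noteq> 1"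
  proof -
    have "inj_on f T"
    proof (rule inj_onI)
      fix t s assume ts: "t \<in> T" "s \<in> T" "f t = f s"
      show "t = s"
      proof (rule ccontr)
        assume "t \<noteq> s"
        hence e: "t * s = - b / a" using key[OF ts] by blast
        have "(t * s) ^ (q + 1) = 1"
        proof -
          have "(t * s) ^ (q + 1) = t ^ (q + 1) * s ^ (q + 1)" by (rule power_mult_distrib)
          thus ?thesis using ts(1,2) by (simp only: T_def mem_Collect_eq) simp
        qed
        hence "(- b / a) ^ (q + 1) = 1" using e by simp
        hence "(inverse (- b / a)) ^ (q + 1) = 1" by (simp only: power_inverse inverse_1)
        moreover have "inverse (- b / a) = - M $ 1 $ 2 / M $ 2 $ 1" by (simp add: a_def b_def)
        ultimately show False using ne by metis
      qed
    qed
    hence "card (f ` T) = card T" by (rule card_image)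
    thus ?thesis using cT card_mono[OF fin sub] by linarith
  qed
  show ?thesis using part1 part2 by blast
qed

end
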